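(* Let the functions satisfy the $M=2$ system and the boundary conditions (B) (see context). Then for all $s>0$, $$e_3-sx_1y_2+2\eta_2+\xi_0-\eta_1+\eta_1\xi_2=0,\qquad e_2-2e_3-sx_0y_1-\eta_2-2\xi_0-\xi_1+\eta_0\xi_1=0 .$$
   Context: Fix complex parameters $\nu_0,\nu_1,\nu_2$ with $\nu_2-\nu_1\notin\mathbb Z$, and let $e_1=\nu_0+\nu_1+\nu_2$, $e_2=\nu_0\nu_1+\nu_0\nu_2+\nu_1\nu_2$, $e_3=\nu_0\nu_1\nu_2$. The $M=2$ system is the following system for smooth complex-valued functions $x_0,x_1,x_2,y_0,y_1,y_2,\xi_0,\xi_1,\xi_2,\eta_0,\eta_1,\eta_2$ of $s\in(0,\infty)$, with $'=d/ds$: $sx_0'=-\eta_0x_0-x_1$, $sx_1'=-\eta_1x_0-x_2$, $sx_2'=-\eta_2x_0-sx_0+\xi_0x_0+\xi_1x_1+\xi_2x_2$, $sy_2'=-\xi_2y_2+y_1$, $sy_1'=-\xi_1y_2+y_0$, $sy_0'=-\xi_0y_2+sy_2+\eta_0y_0+\eta_1y_1+\eta_2y_2$, $\xi_0'=-x_0y_0$, $\xi_1'=-x_0y_1$, $\xi_2'=-x_0y_2$, $\eta_0'=-x_0y_2$, $\eta_1'=-x_1y_2$, $\eta_2'=-x_2y_2$. Boundary conditions (B): as $s\to0^+$, $\eta_0,\eta_1,\eta_2\to0$, $\xi_0\to-e_3$, $\xi_1\to e_2$, $\xi_2\to-e_1$, and $x_j(s)y_k(s)\to0$, $s\,x_j(s)y_k(s)\to0$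 for all $j,k\in\{0,1,2\}$. *)

theory Defs
  imports "HOL-Analysis.Analysis"
begin

abbreviation D :: "(real \<Rightarrow> complex) \<Rightarrow> real \<Rightarrow> complex" where
  "D f s \<equiv> vector_derivative f (at s)"

definition M2_system ::
  "(nat \<Rightarrow> real \<Rightarrow> complex) \<Rightarrow> (nat \<Rightarrow> real \<Rightarrow> complex) \<Rightarrow>
   (nat \<Rightarrow> real \<Rightarrow> complex) \<Rightarrow> (nat \<Rightarrow> real \<Rightarrow> complex) \<Rightarrow> bool" where
  "M2_system x y xi eta \<longleftrightarrow>
    (\<forall>s>0. (\<forall>j\<le>2. x j differentiable (at s) \<and> y j differentiable (at s) \<and>
                   xi j differentiable (at s) \<and> eta j differentiable (at s)) \<and>
      of_real s * D (x 0) s = - eta 0 s * x 0 s - x 1 s \<and>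
      of_real s * D (x 1) s = - eta 1 s * x 0 s - x 2 s \<and>
      of_real s * D (x 2) s = - eta 2 s * x 0 s - of_real s * x 0 s
                               + xi 0 s * x 0 s + xi 1 s * x 1 s + xi 2 s * x 2 s \<and>
      of_real s * D (y 2) s = - xi 2 s * y 2 s + y 1 s \<and>
      of_real s * D (y 1) s = - xi 1 s * y 2 s + y 0 s \<and>
      of_real s * D (y 0) s = - xi 0 s * y 2 s + of_real s * y 2 s
                               + eta 0 s * y 0 s + eta 1 s * y 1 s + eta 2 s * y 2 s \<and>
      D (xi 0) s = - x 0 s * y 0 s \<and>
      D (xi 1) s = - x 0 s * y 1 s \<and>
      D (xi 2) s = - x 0 s * y 2 s \<and>
      D (eta 0) s = - x 0 s * y 2 s \<and>
      D (eta 1) s = - x 1 s * y 2 s \<and>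
      D (eta 2) s = - x 2 s * y 2 s)"

definition M2_boundary ::
  "complex \<Rightarrow> complex \<Rightarrow> complex \<Rightarrow>
   (nat \<Rightarrow> real \<Rightarrow> complex) \<Rightarrow> (nat \<Rightarrow> real \<Rightarrow> complex) \<Rightarrow>
   (nat \<Rightarrow> real \<Rightarrow> complex) \<Rightarrow> (nat \<Rightarrow> real \<Rightarrow> complex) \<Rightarrow> bool" where
  "M2_boundary e1 e2 e3 x y xi eta \<longleftrightarrow>
    (\<forall>j\<le>2. (eta j \<longlongrightarrow> 0) (at_right 0)) \<and>
    (xi 0 \<longlongrightarrow> - e3) (at_right 0) \<and>
    (xi 1 \<longlongrightarrow> e2) (at_right 0) \<and>
    (xi 2 \<longlongrightarrow> - e1) (at_right 0) \<and>
    (\<forall>j\<le>2. \<forall>k\<le>2. ((\<lambda>s. x j s * y k s) \<longlongrightarrow> 0) (at_right 0) \<and>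
                    ((\<lambda>s. of_real s * x j s * y k s) \<longlongrightarrow> 0) (at_right 0))"

end

theory Submission
  imports Defs
begin

lemma zero_from_deriv:
  fixes g :: "real \<Rightarrow> complex"
  assumes d: "\<And>s. s > 0 \<Longrightarrow> (g has_vector_derivative 0) (at s)"
    and l: "(g \<longlongrightarrow> 0) (at_right 0)"
  shows "\<forall>s>0. g s = 0"
proof -
  have d': "\<And>s. s \<in> {0::real<..} \<Longrightarrow> (g has_vector_derivative 0) (at s within {0<..})"
    using d by (auto intro: has_vector_derivative_at_within)
  obtain c where c: "\<And>x. x \<in> {0::real<..} \<Longrightarrow> g x = c"
    using has_vector_derivative_zero_constant[OF convex_real_interval(3) d'] by metis
  have ev: "\<forall>\<^sub>F x in at_right 0. g x = c"
    unfolding eventually_at_right_field using c by (intro exI[of _ 1]) auto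
  have "((\<lambda>_. c) \<longlongrightarrow> 0) (at_right (0::real))"
    using Lim_transform_eventually[OF l ev] .
  then have "c = 0" by (simp add: tendsto_const_iff)
  with c show ?thesis by auto
qed

lemma vd: "f differentiable (at s) \<Longrightarrow> (f has_vector_derivative D f s) (at s)"
  by (simp add: vector_derivative_works)

theorem mainTheorem7:
  fixes \<nu>0 \<nu>1 \<nu>2 :: complex
    and x y xi eta :: "nat \<Rightarrow> real \<Rightarrow> complex"
  assumes "\<nu>2 - \<nu>1 \<notin> \<int>"
    and "M2_system x y xi eta"
    and "M2_boundary (\<nu>0 + \<nu>1 + \<nu>2) (\<nu>0 * \<nu>1 + \<nu>0 * \<nu>2 + \<nu>1 * \<nu>2) (\<nu>0 * \<nu>1 * \<nu>2)
           x y xi eta"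
  shows "\<forall>s>0.
    \<nu>0 * \<nu>1 * \<nu>2 - of_real s * x 1 s * y 2 s + 2 * eta 2 s + xi 0 s - eta 1 s
      + eta 1 s * xi 2 s = 0 \<and>
    (\<nu>0 * \<nu>1 + \<nu>0 * \<nu>2 + \<nu>1 * \<nu>2) - 2 * (\<nu>0 * \<nu>1 * \<nu>2) - of_real s * x 0 s * y 1 s
      - eta 2 s - 2 * xi 0 s - xi 1 s + eta 0 s * xi 1 s = 0"
proof -
  note S = assms(2)[unfolded M2_system_def]
  note B = assms(3)[unfolded M2_boundary_def]
  have P: "((\<lambda>s. x j s * y k s) \<longlongrightarrow> 0) (at_right 0)" if "j \<le> 2" "k \<le> 2" for j k
    using B that by blast
  have Q: "((\<lambda>s. of_real s * x j s * y k s) \<longlongrightarrow> 0) (at_right 0)" if "j \<le> 2" "k \<le> 2" for j k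
    using B that by blast
  have Et: "(eta j \<longlongrightarrow> 0) (at_right 0)" if "j \<le> 2" for j
    using B that by blast
  have X0: "(xi 0 \<longlongrightarrow> -(\<nu>0 * \<nu>1 * \<nu>2)) (at_right 0)" using B by blast
  have X1: "(xi 1 \<longlongrightarrow> \<nu>0 * \<nu>1 + \<nu>0 * \<nu>2 + \<nu>1 * \<nu>2) (at_right 0)" using B by blast
  have X2: "(xi 2 \<longlongrightarrow> -(\<nu>0 + \<nu>1 + \<nu>2)) (at_right 0)" using B by blast
  define T where "T s = x 0 s * y 0 s + x 1 s * y 1 s + x 2 s * y 2 s" for s
  have dT: "(T has_vector_derivative 0) (at s)" if s: "s > 0" for s
  proof -
    note Ss = S[rule_format, OF s]
    have dd: "\<And>j. j \<le> 2 \<Longrightarrow> x j differentiable (at s) \<and> y j differentiable (at s)"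
      using Ss[THEN conjunct1] by blast
    have h: "(T has_vector_derivative
       (x 0 s * D (y 0) s + D (x 0) s * y 0 s) + (x 1 s * D (y 1) s + D (x 1) s * y 1 s)
       + (x 2 s * D (y 2) s + D (x 2) s * y 2 s)) (at s)"
      unfolding T_def using dd[of 0] dd[of 1] dd[of 2]
      by (intro derivative_intros vd) auto
    have "of_real s * ((x 0 s * D (y 0) s + D (x 0) s * y 0 s) + (x 1 s * D (y 1) s + D (x 1) s * y 1 s)
       + (x 2 s * D (y 2) s + D (x 2) s * y 2 s)) = 0"
    proof -
      from Ss have e: "of_real s * D (x 0) s = - eta 0 s * x 0 s - x 1 s"
        "of_real s * D (x 1) s = - eta 1 s * x 0 s - x 2 s"
        "of_real s * D (x 2) s = - eta 2 s * x 0 s - of_real s * x 0 s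
                               + xi 0 s * x 0 s + xi 1 s * x 1 s + xi 2 s * x 2 s"
        "of_real s * D (y 2) s = - xi 2 s * y 2 s + y 1 s"
        "of_real s * D (y 1) s = - xi 1 s * y 2 s + y 0 s"
        "of_real s * D (y 0) s = - xi 0 s * y 2 s + of_real s * y 2 s
                               + eta 0 s * y 0 s + eta 1 s * y 1 s + eta 2 s * y 2 s" by - (elim conjE, assumption)+
      have "of_real s * ((x 0 s * D (y 0) s + D (x 0) s * y 0 s) + (x 1 s * D (y 1) s + D (x 1) s * y 1 s)
       + (x 2 s * D (y 2) s + D (x 2) s * y 2 s)) = x 0 s * (of_real s * D (y 0) s) + (of_real s * D (x 0) s) * y 0 s
        + x 1 s * (of_real s * D (y 1) s) + (of_real s * D (x 1) s) * y 1 s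
        + x 2 s * (of_real s * D (y 2) s) + (of_real s * D (x 2) s) * y 2 s" by algebra
      also have "\<dots> = 0" unfolding e by algebra
      finally show ?thesis .
    qed
    with s h show ?thesis by simp
  qed
  have lT: "(T \<longlongrightarrow> 0) (at_right 0)"
    unfolding T_def using tendsto_add[OF tendsto_add[OF P[of 0 0] P[of 1 1]] P[of 2 2]] by simp
  have T0: "\<forall>s>0. T s = 0" using zero_from_deriv[OF dT lT] by auto
  define F1 where "F1 s = \<nu>0 * \<nu>1 * \<nu>2 - of_real s * x 1 s * y 2 s + 2 * eta 2 s + xi 0 s - eta 1 s
      + eta 1 s * xi 2 s" for s
  define F2 where "F2 s = (\<nu>0 * \<nu>1 + \<nu>0 * \<nu>2 + \<nu>1 * \<nu>2) - 2 * (\<nu>0 * \<nu>1 * \<nu>2) - of_real s * x 0 s * y 1 s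
      - eta 2 s - 2 * xi 0 s - xi 1 s + eta 0 s * xi 1 s" for s
  have dF1: "(F1 has_vector_derivative 0) (at s)" if s: "s > 0" for s
  proof -
    note Ss = S[rule_format, OF s]
    have dd: "\<And>j. j \<le> 2 \<Longrightarrow> x j differentiable (at s) \<and> y j differentiable (at s) \<and>
                   xi j differentiable (at s) \<and> eta j differentiable (at s)"
      using Ss[THEN conjunct1] by blast
    have h: "(F1 has_vector_derivative
       (0 - (of_real s * x 1 s * D (y 2) s + (of_real s * D (x 1) s + of_real 1 * x 1 s) * y 2 s)
        + 2 * D (eta 2) s + D (xi 0) s - D (eta 1) s + (eta 1 s * D (xi 2) s + D (eta 1) s * xi 2 s))) (at s)"
      unfolding F1_def using dd[of 0] dd[of 1] dd[of 2]
      by (intro derivative_intros vd DERIV_ident) auto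
    have "of_real s * (0 - (of_real s * x 1 s * D (y 2) s + (of_real s * D (x 1) s + of_real 1 * x 1 s) * y 2 s)
        + 2 * D (eta 2) s + D (xi 0) s - D (eta 1) s + (eta 1 s * D (xi 2) s + D (eta 1) s * xi 2 s))
      = - of_real s * T s"
    proof -
      from Ss have e: "of_real s * D (x 0) s = - eta 0 s * x 0 s - x 1 s"
        "of_real s * D (x 1) s = - eta 1 s * x 0 s - x 2 s"
        "of_real s * D (x 2) s = - eta 2 s * x 0 s - of_real s * x 0 s
                               + xi 0 s * x 0 s + xi 1 s * x 1 s + xi 2 s * x 2 s"
        "of_real s * D (y 2) s = - xi 2 s * y 2 s + y 1 s"
        "of_real s * D (y 1) s = - xi 1 s * y 2 s + y 0 s"
        "of_real s * D (y 0) s = - xi 0 s * y 2 s + of_real s * y 2 s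
                               + eta 0 s * y 0 s + eta 1 s * y 1 s + eta 2 s * y 2 s" 
        "D (xi 0) s = - x 0 s * y 0 s"
        "D (xi 1) s = - x 0 s * y 1 s"
        "D (xi 2) s = - x 0 s * y 2 s"
        "D (eta 0) s = - x 0 s * y 2 s"
        "D (eta 1) s = - x 1 s * y 2 s"
        "D (eta 2) s = - x 2 s * y 2 s" by - (elim conjE, assumption)+
      have "of_real s * (0 - (of_real s * x 1 s * D (y 2) s + (of_real s * D (x 1) s + of_real 1 * x 1 s) * y 2 s)
        + 2 * D (eta 2) s + D (xi 0) s - D (eta 1) s + (eta 1 s * D (xi 2) s + D (eta 1) s * xi 2 s))
        = of_real s * (0 - (x 1 s * (of_real s * D (y 2) s) + ((of_real s * D (x 1) s) + x 1 s) * y 2 s)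
        + 2 * D (eta 2) s + D (xi 0) s - D (eta 1) s + (eta 1 s * D (xi 2) s + D (eta 1) s * xi 2 s))" by (simp; algebra)
      also have "\<dots> = - of_real s * T s" unfolding e T_def by algebra
      finally show ?thesis .
    qed
    with s h T0 show ?thesis by simp
  qed
  have dF2: "(F2 has_vector_derivative 0) (at s)" if s: "s > 0" for s
  proof -
    note Ss = S[rule_format, OF s]
    have dd: "\<And>j. j \<le> 2 \<Longrightarrow> x j differentiable (at s) \<and> y j differentiable (at s) \<and>
                   xi j differentiable (at s) \<and> eta j differentiable (at s)"
      using Ss[THEN conjunct1] by blast
    have h: "(F2 has_vector_derivative
       (0 - (of_real s * x 0 s * D (y 1) s + (of_real s * D (x 0) s + of_real 1 * x 0 s) * y 1 s)
        - D (eta 2) s - 2 * D (xi 0) s - D (xi 1) s + (eta 0 s * D (xi 1) s + D (eta 0) s * xi 1 s))) (at s)"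
      unfolding F2_def using dd[of 0] dd[of 1] dd[of 2]
      by (intro derivative_intros vd DERIV_ident) auto
    have "of_real s * (0 - (of_real s * x 0 s * D (y 1) s + (of_real s * D (x 0) s + of_real 1 * x 0 s) * y 1 s)
        - D (eta 2) s - 2 * D (xi 0) s - D (xi 1) s + (eta 0 s * D (xi 1) s + D (eta 0) s * xi 1 s))
      = of_real s * T s"
    proof -
      from Ss have e: "of_real s * D (x 0) s = - eta 0 s * x 0 s - x 1 s"
        "of_real s * D (x 1) s = - eta 1 s * x 0 s - x 2 s"
        "of_real s * D (x 2) s = - eta 2 s * x 0 s - of_real s * x 0 s
                               + xi 0 s * x 0 s + xi 1 s * x 1 s + xi 2 s * x 2 s"
        "of_real s * D (y 2) s = - xi 2 s * y 2 s + y 1 s"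
        "of_real s * D (y 1) s = - xi 1 s * y 2 s + y 0 s"
        "of_real s * D (y 0) s = - xi 0 s * y 2 s + of_real s * y 2 s
                               + eta 0 s * y 0 s + eta 1 s * y 1 s + eta 2 s * y 2 s" 
        "D (xi 0) s = - x 0 s * y 0 s"
        "D (xi 1) s = - x 0 s * y 1 s"
        "D (xi 2) s = - x 0 s * y 2 s"
        "D (eta 0) s = - x 0 s * y 2 s"
        "D (eta 1) s = - x 1 s * y 2 s"
        "D (eta 2) s = - x 2 s * y 2 s" by - (elim conjE, assumption)+
      have "of_real s * (0 - (of_real s * x 0 s * D (y 1) s + (of_real s * D (x 0) s + of_real 1 * x 0 s) * y 1 s)
        - D (eta 2) s - 2 * D (xi 0) s - D (xi 1) s + (eta 0 s * D (xi 1) s + D (eta 0) s * xi 1 s))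
        = of_real s * (0 - (x 0 s * (of_real s * D (y 1) s) + ((of_real s * D (x 0) s) + x 0 s) * y 1 s)
        - D (eta 2) s - 2 * D (xi 0) s - D (xi 1) s + (eta 0 s * D (xi 1) s + D (eta 0) s * xi 1 s))" by (simp; algebra)
      also have "\<dots> = of_real s * T s" unfolding e T_def by algebra
      finally show ?thesis .
    qed
    with s h T0 show ?thesis by simp
  qed
  have lF1: "(F1 \<longlongrightarrow> 0) (at_right 0)"
  proof -
    have "(F1 \<longlongrightarrow> \<nu>0 * \<nu>1 * \<nu>2 - 0 + 2 * 0 + (-(\<nu>0 * \<nu>1 * \<nu>2)) - 0 + 0 * (-(\<nu>0 + \<nu>1 + \<nu>2))) (at_right 0)"
      unfolding F1_def
      by (intro tendsto_add tendsto_diff tendsto_mult tendsto_const Q Et X0 X1 X2) auto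
    then show ?thesis by simp
  qed
  have lF2: "(F2 \<longlongrightarrow> 0) (at_right 0)"
  proof -
    have "(F2 \<longlongrightarrow> (\<nu>0 * \<nu>1 + \<nu>0 * \<nu>2 + \<nu>1 * \<nu>2) - 2 * (\<nu>0 * \<nu>1 * \<nu>2) - 0
      - 0 - 2 * (-(\<nu>0 * \<nu>1 * \<nu>2)) - (\<nu>0 * \<nu>1 + \<nu>0 * \<nu>2 + \<nu>1 * \<nu>2) + 0 * (\<nu>0 * \<nu>1 + \<nu>0 * \<nu>2 + \<nu>1 * \<nu>2)) (at_right 0)"
      unfolding F2_def
      by (intro tendsto_add tendsto_diff tendsto_mult tendsto_const Q Et X0 X1 X2) auto
    then show ?thesis by simp
  qed
  show ?thesis using zero_from_deriv[OF dF1 lF1] zero_from_deriv[OF dF2 lF2]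
    unfolding F1_def F2_def by auto
qed

end
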